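(* With $\alpha=(1+\sqrt5)/2$, $\beta=(1-\sqrt5)/2$, the following hold: $$\operatorname{Li}_2\Big(\frac\alpha2\Big)+\operatorname{Li}_2\Big(\frac\beta2\Big)=\frac{\pi^2}{12}+2\ln^2\alpha-\ln^2 2,$$ $$\operatorname{Li}_2\Big(\frac{\alpha^3}5\Big)+\operatorname{Li}_2\Big(\frac{\beta^3}5\Big)=\frac{\pi^2}{12}+6\ln^2\alpha-2\ln^22+2\ln2\ln5-\ln^25-\operatorname{Li}_2\Big(-\frac14\Big);$$ for every even integer $r\ge0$, $$\operatorname{Li}_2\Big(\frac{\alpha^r}{L_r}\Big)+\operatorname{Li}_2\Big(\frac{\beta^r}{L_r}\Big)=\frac{\pi^2}{6}+r^2\ln^2\alpha-\ln^2(L_r),$$ in particular $\operatorname{Li}_2(\alpha^2/3)+\operatorname{Li}_2(\beta^2/3)=\frac{\pi^2}6+4\ln^2\alpha-\ln^23$; for every odd integer $r\ge1$, $$\operatorname{Li}_2\Big(\frac{\alpha^r}{\sqrt5F_r}\Big)+\operatorname{Li}_2\Big(\frac{-\beta^r}{\sqrt5F_r}\Big)=\frac{\pi^2}{6}+r^2\ln^2\alpha-\frac14\ln^25-\ln5\ln(F_r)-\ln^2(F_r),$$ in particular $\operatorname{Li}_2(\alpha/\sqrt5)+\operatorname{Li}_2(-\beta/\sqrt5)=\frac{\pi^2}6+\ln^2\alpha-\frac14\ln^25$; and $$\operatorname{Li}_2\Big(\frac{\alpha^2}4\Big)+\operatorname{Li}_2\Big(\frac{\beta^2}4\Big)=\frac{\pi^2}{6}+2\ln^2\alpha-\frac12\ln^25+2\ln2\ln5-4\ln^22-\operatorname{Li}_2\Big(\frac15\Big),$$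 $$\operatorname{Li}_2\Big(\frac\alpha3\Big)+\operatorname{Li}_2\Big(\frac\beta3\Big)=\ln^2\alpha-\frac14\ln^25+\ln3\ln5-\ln^23+\frac32\operatorname{Li}_2\Big(\frac15\Big)-\frac12\operatorname{Li}_2\Big(\frac1{25}\Big).$$
   Context: $\operatorname{Li}_2(x)=\sum_{k\ge1}x^k/k^2$ is the dilogarithm (for real $x\le1$). $F_n=(\alpha^n-\beta^n)/(\alpha-\beta)$ and $L_n=\alpha^n+\beta^n$ are the Fibonacci and Lucas numbers. *)

theory Defs
  imports "HOL-Analysis.Analysis"
begin

text \<open>Dilogarithm Li_2(x) = sum_{k>=1} x^k / k^2 (intended for real x with |x| <= 1).\<close>
definition Li2 :: "real \<Rightarrow> real" where
  "Li2 x = (\<Sum>k. x ^ Suc k / (real (Suc k))\<^sup>2)"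

definition gold_alpha :: real where "gold_alpha = (1 + sqrt 5) / 2"
definition gold_beta :: real where "gold_beta = (1 - sqrt 5) / 2"

definition fibR :: "nat \<Rightarrow> real" where
  "fibR n = (gold_alpha ^ n - gold_beta ^ n) / (gold_alpha - gold_beta)"
definition lucasR :: "nat \<Rightarrow> real" where
  "lucasR n = gold_alpha ^ n + gold_beta ^ n"

end

theory Submission
  imports Defs "HOL-Real_Asymp.Real_Asymp"
begin


definition li2c :: "nat \<Rightarrow> real" where "li2c n = (if n = 0 then 0 else 1 / (real n)\<^sup>2)"

lemma Li2_powser: "Li2 x = (\<Sum>n. li2c n * x ^ n)"
proof -
  have "(\<lambda>k. x ^ Suc k / (real (Suc k))\<^sup>2) = (\<lambda>n. li2c (Suc n) * x ^ (Suc n))"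
    by (auto simp: li2c_def)
  then have "\<And>s. (\<lambda>k. x ^ Suc k / (real (Suc k))\<^sup>2) sums s \<longleftrightarrow> (\<lambda>n. li2c n * x ^ n) sums s"
    using sums_Suc_iff[of "\<lambda>n. li2c n * x ^ n"] by (simp add: li2c_def)
  then have "(sums) (\<lambda>k. x ^ Suc k / (real (Suc k))\<^sup>2) = (sums) (\<lambda>n. li2c n * x ^ n)"
    by (intro ext)
  then show ?thesis unfolding Li2_def suminf_def by simp
qed

lemma summable_inv_sq: "summable (\<lambda>k. 1 / (real (Suc k))\<^sup>2)"
  using inverse_squares_sums sums_summable by (simp add: add.commute)

lemma Li2_summable: "\<bar>x\<bar> \<le> 1 \<Longrightarrow> summable (\<lambda>k. x ^ Suc k / (real (Suc k))\<^sup>2)"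
proof (rule summable_comparison_test'[OF summable_inv_sq])
  fix n assume "\<bar>x\<bar> \<le> 1"
  then have h: "\<bar>x\<bar> ^ Suc n \<le> 1" by (intro power_le_one) auto
  have "norm (x ^ Suc n / (real (Suc n))\<^sup>2) = \<bar>x\<bar> ^ Suc n / (real (Suc n))\<^sup>2"
    by (simp add: abs_divide power_abs del: power_Suc of_nat_Suc)
  also have "\<dots> \<le> 1 / (real (Suc n))\<^sup>2" by (rule divide_right_mono) (use h in auto)
  finally show "norm (x ^ Suc n / (real (Suc n))\<^sup>2) \<le> 1 / (real (Suc n))\<^sup>2" .
qed

lemma Li2_0: "Li2 0 = 0" by (simp add: Li2_def)

lemma Li2_1: "Li2 1 = pi\<^sup>2 / 6"
proof -
  have h: "(\<lambda>n. 1 / (1 + real n)\<^sup>2) sums (pi\<^sup>2 / 6)" using inverse_squares_sums by simp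
  have e: "(\<lambda>k. (1::real) ^ Suc k / (real (Suc k))\<^sup>2) = (\<lambda>n. 1 / (1 + real n)\<^sup>2)" by simp
  show ?thesis unfolding Li2_def e by (rule sums_unique[OF h, symmetric])
qed

lemma Li2_cont: "continuous_on {-1..1} Li2"
proof -
  have "uniform_limit {-1..1} (\<lambda>n x. \<Sum>k<n. x ^ Suc k / (real (Suc k))\<^sup>2) (\<lambda>x. \<Sum>k. x ^ Suc k / (real (Suc k))\<^sup>2) sequentially"
  proof (rule Weierstrass_m_test[OF _ summable_inv_sq])
    fix n and x :: real assume "x \<in> {-1..1}"
    then have h: "\<bar>x\<bar> ^ Suc n \<le> 1" by (intro power_le_one) auto
    have "norm (x ^ Suc n / (real (Suc n))\<^sup>2) = \<bar>x\<bar> ^ Suc n / (real (Suc n))\<^sup>2"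
      by (simp add: abs_divide power_abs del: power_Suc of_nat_Suc)
    also have "\<dots> \<le> 1 / (real (Suc n))\<^sup>2" by (rule divide_right_mono) (use h in auto)
    finally show "norm (x ^ Suc n / (real (Suc n))\<^sup>2) \<le> 1 / (real (Suc n))\<^sup>2" .
  qed
  then have "continuous_on {-1..1} (\<lambda>x. \<Sum>k. x ^ Suc k / (real (Suc k))\<^sup>2)"
    by (rule uniform_limit_theorem[rotated]) (auto intro!: always_eventually continuous_intros)
  then show ?thesis unfolding Li2_def[abs_def] .
qed

definition G :: "real \<Rightarrow> real" where "G x = (\<Sum>n. x ^ n / real (Suc n))"

lemma Li2_deriv: assumes "\<bar>x\<bar> < 1" shows "(Li2 has_real_derivative G x) (at x)"
proof -
  have eq: "Li2 = (\<lambda>x. \<Sum>n. li2c n * x ^ n)" using Li2_powser by auto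
  have sm: "summable (\<lambda>n. li2c n * z ^ n)" if "norm z < 1" for z :: real
  proof -
    have "summable (\<lambda>k. li2c (Suc k) * z ^ Suc k)"
      using Li2_summable[of z] that by (simp add: li2c_def)
    then show ?thesis by (rule summable_Suc_iff[of "\<lambda>n. li2c n * z ^ n", THEN iffD1])
  qed
  have "((\<lambda>x. \<Sum>n. li2c n * x ^ n) has_field_derivative (\<Sum>n. diffs li2c n * x ^ n)) (at x)"
    by (rule termdiffs_strong'[of 1]) (use sm assms in auto)
  moreover have "(\<lambda>n. diffs li2c n * x ^ n) = (\<lambda>n. x ^ n / real (Suc n))"
    by (auto simp: diffs_def li2c_def power2_eq_square simp del: of_nat_Suc)
  ultimately show ?thesis by (simp add: eq G_def)
qed

lemma G_ln: assumes "\<bar>x\<bar> < 1" shows "x * G x = - ln (1 - x)"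
proof -
  have "(\<lambda>n. - ((-(-x))^n) / of_nat n) sums ln (1 + (-x))"
    by (rule ln_series') (use assms in auto)
  then have "(\<lambda>n. x^n / of_nat n) sums (- ln (1 - x))"
    using sums_minus by fastforce
  then have "(\<lambda>n. x^Suc n / of_nat (Suc n)) sums (- ln (1 - x))"
    by (subst sums_Suc_iff) simp
  then have "(\<lambda>n. x * (x^n / of_nat (Suc n))) sums (- ln (1 - x))" by simp
  moreover have "(\<lambda>n. x * (x^n / of_nat (Suc n))) sums (x * G x)"
  proof -
    have "summable (\<lambda>n. x^n / real (Suc n))"
    proof (rule summable_comparison_test'[of "\<lambda>n. \<bar>x\<bar>^n"])
      show "summable (\<lambda>n. \<bar>x\<bar>^n)" using assms by (simp add: summable_geometric)
      fix n :: nat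
      have "\<bar>x\<bar>^n / real (Suc n) \<le> \<bar>x\<bar>^n" by (simp add: divide_le_eq mult_le_cancel_left1 del: of_nat_Suc)
      then show "norm (x^n / real (Suc n)) \<le> \<bar>x\<bar>^n" by (simp add: power_abs)
    qed
    then show ?thesis unfolding G_def by (intro sums_mult summable_sums)
  qed
  ultimately show ?thesis using sums_unique2 by blast
qed

lemma G_0: "G 0 = 1"
  unfolding G_def using powser_zero[of "\<lambda>n. 1 / real (Suc n)"] by simp



lemma Li2_chain[derivative_intros]:
  assumes "(f has_real_derivative f') (at x within s)" "\<bar>f x\<bar> < 1"
  shows "((\<lambda>x. Li2 (f x)) has_real_derivative (G (f x) * f')) (at x within s)"
  using DERIV_chain2[OF Li2_deriv[OF assms(2)] assms(1)] .

lemma G_eq: "\<bar>t\<bar> < 1 \<Longrightarrow> t \<noteq> 0 \<Longrightarrow> G t = - ln (1 - t) / t"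
  using G_ln[of t] by (simp add: field_simps)

lemma const_on_ivl:
  assumes "\<And>x. x \<in> {a<..<b} \<Longrightarrow> (F has_real_derivative 0) (at x)"
  shows "\<exists>c. \<forall>x\<in>{a<..<b}. F x = c"
proof (rule has_field_derivative_zero_constant)
  fix x assume "x \<in> {a<..<b}"
  then show "(F has_field_derivative 0) (at x within {a<..<b})"
    by (rule has_field_derivative_at_within[OF assms])
qed simp

lemma Li2_tendsto:
  assumes "(f \<longlongrightarrow> a) F" "a \<in> {-1..1}" "eventually (\<lambda>x. f x \<in> {-1..1}) F"
  shows "((\<lambda>x. Li2 (f x)) \<longlongrightarrow> Li2 a) F"
  by (rule continuous_on_tendsto_compose[OF Li2_cont assms])

lemma Li2_refl:
  assumes "0 < x" "x < 1"
  shows "Li2 x + Li2 (1 - x) = pi\<^sup>2 / 6 - ln x * ln (1 - x)"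
proof -
  define F where "F x = Li2 x + Li2 (1 - x) + ln x * ln (1 - x)" for x
  have d: "(F has_real_derivative 0) (at x)" if "x \<in> {0<..<1}" for x
  proof -
    have "(F has_real_derivative (G x * 1 + G (1 - x) * (0 - 1) + (1 / x * ln (1 - x) + ln x * ((0 - 1) / (1 - x))))) (at x)"
      unfolding F_def[abs_def] using that by (auto intro!: derivative_eq_intros)
    moreover have "G x * 1 + G (1 - x) * (0 - 1) + (1 / x * ln (1 - x) + ln x * ((0 - 1) / (1 - x))) = 0"
      using that by (simp add: G_eq field_simps)
    ultimately show ?thesis by simp
  qed
  obtain c where c: "\<And>y. y \<in> {0<..<1} \<Longrightarrow> F y = c" using const_on_ivl[of 0 1 F] d by blast
  have ev: "eventually (\<lambda>y. y \<in> {0<..<1}) (at_right (0::real))"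
    by (simp add: eventually_at_right_field) (auto intro: exI[of _ 1])
  have t1: "(F \<longlongrightarrow> Li2 0 + Li2 (1 - 0) + 0) (at_right 0)"
    unfolding F_def
  proof (intro tendsto_add)
    show "((\<lambda>x. Li2 x) \<longlongrightarrow> Li2 0) (at_right 0)"
      by (rule Li2_tendsto) (auto intro!: tendsto_intros eventually_mono[OF ev])
    show "((\<lambda>x. Li2 (1 - x)) \<longlongrightarrow> Li2 (1 - 0)) (at_right 0)"
      by (rule Li2_tendsto) (real_asymp, auto intro!: eventually_mono[OF ev])
    show "((\<lambda>x::real. ln x * ln (1 - x)) \<longlongrightarrow> 0) (at_right 0)" by real_asymp
  qed
  have t2: "(F \<longlongrightarrow> c) (at_right 0)"
    by (rule tendsto_eventually) (rule eventually_mono[OF ev], simp add: c)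
  have "c = Li2 0 + Li2 (1 - 0) + 0" by (rule tendsto_unique[OF _ t2 t1]) simp
  then show ?thesis using c[of x] assms by (simp add: F_def Li2_0 Li2_1)
qed



lemma sq_ge_m1[simp]: "- 1 \<le> (x::real)\<^sup>2"
  by (rule order_trans[of _ 0]) auto

lemma Li2_dup_open:
  assumes "\<bar>x\<bar> < 1"
  shows "Li2 x + Li2 (- x) = Li2 (x\<^sup>2) / 2"
proof -
  define F where "F x = Li2 x + Li2 (- x) - Li2 (x\<^sup>2) / 2" for x
  have d: "(F has_real_derivative 0) (at x)" if "x \<in> {-1<..<1}" for x
  proof -
    have hx: "\<bar>x\<bar> < 1" using that by auto
    then have x2: "\<bar>x\<^sup>2\<bar> < 1" by (simp add: abs_square_less_1)
    have dsq: "((\<lambda>x. x\<^sup>2) has_real_derivative 2 * x) (at x)"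
      by (auto intro!: derivative_eq_intros)
    have "(F has_real_derivative (G x * 1 + G (- x) * (- 1) - G (x\<^sup>2) * (2 * x) / 2)) (at x)"
      unfolding F_def[abs_def] using hx x2
      by (intro DERIV_add DERIV_diff DERIV_cdivide Li2_chain DERIV_ident DERIV_minus dsq) auto
    moreover have "G x * 1 + G (- x) * (- 1) - G (x\<^sup>2) * (2 * x) / 2 = 0"
    proof (cases "x = 0")
      case True then show ?thesis by (simp add: G_0)
    next
      case False
      have l: "ln (1 - x\<^sup>2) = ln (1 - x) + ln (1 + x)"
      proof -
        have e: "1 - x\<^sup>2 = (1 - x) * (1 + x)" by (simp add: algebra_simps power2_eq_square)
        have "1 - x \<noteq> 0" "1 + x \<noteq> 0" using hx by auto
        then show ?thesis unfolding e by (simp add: ln_mult)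
      qed
      have "x\<^sup>2 \<noteq> 0" using False by simp
      then show ?thesis using hx x2 False by (simp add: G_eq l field_simps) (simp add: power2_eq_square algebra_simps)
    qed
    ultimately show ?thesis by simp
  qed
  obtain c where c: "\<And>y. y \<in> {-1<..<1} \<Longrightarrow> F y = c" using const_on_ivl[of "-1" 1 F] d by blast
  have "F 0 = 0" by (simp add: F_def Li2_0)
  then have "c = 0" using c[of 0] by simp
  moreover have "x \<in> {-1<..<1}" using assms by (auto simp: abs_less_iff)
  ultimately show ?thesis using c[of x] by (simp add: F_def)
qed

lemma Li2_m1: "Li2 (-1) = - pi\<^sup>2 / 12"
proof -
  have ev: "eventually (\<lambda>y. y \<in> {0<..<1}) (at_left (1::real))"
    by (simp add: eventually_at_left_field) (auto intro: exI[of _ 0])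
  have t1: "((\<lambda>x. Li2 x + Li2 (- x)) \<longlongrightarrow> Li2 1 + Li2 (- 1)) (at_left 1)"
  proof (intro tendsto_add)
    show "(Li2 \<longlongrightarrow> Li2 1) (at_left 1)"
      by (rule Li2_tendsto[where f="\<lambda>x. x"]) (auto intro!: eventually_mono[OF ev] tendsto_ident_at)
    show "((\<lambda>x. Li2 (- x)) \<longlongrightarrow> Li2 (- 1)) (at_left 1)"
      by (rule Li2_tendsto) (real_asymp, auto intro!: eventually_mono[OF ev])
  qed
  have t2: "((\<lambda>x. Li2 x + Li2 (- x)) \<longlongrightarrow> Li2 1 / 2) (at_left 1)"
  proof -
    have "((\<lambda>x. Li2 (x\<^sup>2) / 2) \<longlongrightarrow> Li2 (1\<^sup>2) / 2) (at_left 1)"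
      by (intro tendsto_divide tendsto_const Li2_tendsto) (real_asymp, auto intro!: eventually_mono[OF ev] simp: abs_square_le_1)
    then have "((\<lambda>x. Li2 (x\<^sup>2) / 2) \<longlongrightarrow> Li2 1 / 2) (at_left 1)" by simp
    moreover have "eventually (\<lambda>x. Li2 (x\<^sup>2) / 2 = Li2 x + Li2 (- x)) (at_left 1)"
      by (rule eventually_mono[OF ev]) (simp add: Li2_dup_open)
    ultimately show ?thesis by (rule Lim_transform_eventually)
  qed
  have "Li2 1 + Li2 (- 1) = Li2 1 / 2" by (rule tendsto_unique[OF _ t1 t2]) simp
  then show ?thesis by (simp add: Li2_1)
qed

lemma Li2_landen:
  assumes "-1 < z" "z < 1/2"
  shows "Li2 z + Li2 (z / (z - 1)) = - (ln (1 - z))\<^sup>2 / 2"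
proof -
  define F where "F z = Li2 z + Li2 (z / (z - 1)) + (ln (1 - z))\<^sup>2 / 2" for z
  have d: "(F has_real_derivative 0) (at z)" if "z \<in> {-1<..<1/2}" for z
  proof -
    have w: "\<bar>z / (z - 1)\<bar> < 1" using that by (auto simp: abs_less_iff field_simps)
    have nz2: "1 + z * z - z * 2 \<noteq> 0" "z - 1 \<noteq> 0" "1 - z \<noteq> 0"
    proof -
      have "1 + z * z - z * 2 = (z - 1)\<^sup>2" by (simp add: power2_eq_square algebra_simps)
      then show "1 + z * z - z * 2 \<noteq> 0" using that by auto
    qed (use that in auto)
    have dw: "((\<lambda>z. z / (z - 1)) has_real_derivative (- 1 / (z - 1)\<^sup>2)) (at z)"
      using nz2 by (auto intro!: derivative_eq_intros simp: field_simps power2_eq_square)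
    have dL: "((\<lambda>z. (ln (1 - z))\<^sup>2 / 2) has_real_derivative (- ln (1 - z) / (1 - z))) (at z)"
      using that nz2 by (auto intro!: derivative_eq_intros simp: field_simps power2_eq_square)
    have "(F has_real_derivative (G z * 1 + G (z / (z - 1)) * (- 1 / (z - 1)\<^sup>2) + - ln (1 - z) / (1 - z))) (at z)"
      unfolding F_def[abs_def] using that w
      by (intro DERIV_add Li2_chain DERIV_ident dw dL) auto
    moreover have "G z * 1 + G (z / (z - 1)) * (- 1 / (z - 1)\<^sup>2) + - ln (1 - z) / (1 - z) = 0"
    proof (cases "z = 0")
      case True then show ?thesis by (simp add: G_0)
    next
      case False
      have l: "ln (1 - z / (z - 1)) = - ln (1 - z)"
      proof -
        have "1 - z / (z - 1) = inverse (1 - z)" using that by (simp add: field_simps)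
        then show ?thesis using that by (simp add: ln_inverse)
      qed
      have nz: "z - 1 \<noteq> 0" "1 - z \<noteq> 0" "z / (z - 1) \<noteq> 0" "\<bar>z\<bar> < 1" using that False by auto
      have gz: "G z = - ln (1 - z) / z" using G_eq[OF nz(4) False] .
      have gw: "G (z / (z - 1)) = ln (1 - z) / (z / (z - 1))"
        using G_eq[OF w nz(3)] unfolding l by simp
      have "(z - 1)\<^sup>2 \<noteq> 0" using nz by simp
      then show ?thesis using nz False by (simp add: gz gw field_simps) (simp add: power2_eq_square algebra_simps)
    qed
    ultimately show ?thesis by simp
  qed
  obtain c where c: "\<And>y. y \<in> {-1<..<1/2} \<Longrightarrow> F y = c" using const_on_ivl[of "-1" "1/2" F] d by blast
  have "F 0 = 0" by (simp add: F_def Li2_0)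
  then have "c = 0" using c[of 0] by simp
  then show ?thesis using c[of z] assms by (simp add: F_def)
qed



lemma chi_alg0:
  fixes x l A p q :: real
  assumes "p \<noteq> 0" "q \<noteq> 0" "x \<noteq> 0" "p + q = 2"
  shows "A / x + (- 2 / p\<^sup>2) * (- l / (q / p)) - (1 / x * A + (1 / p - - 1 / q) * l) = 0"
proof -
  have e1: "(- 2 / p\<^sup>2) * (- l / (q / p)) = 2 * l / (p * q)"
    using assms by (simp add: field_simps power2_eq_square)
  have e2: "(1 / p - - 1 / q) * l = (p + q) * l / (p * q)"
    using assms by (simp add: field_simps)
  show ?thesis unfolding e1 e2 assms(4) using assms by simp
qed

lemma chi_alg:
  fixes x l A :: real
  assumes "0 < x" "x < 1"
  shows "A / x + (- 2 / (1 + x)\<^sup>2) * (- l / ((1 - x) / (1 + x))) - (1 / x * A + (1 / (1 + x) - - 1 / (1 - x)) * l) = 0"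
  by (rule chi_alg0) (use assms in auto)

lemma dln1: "0 < 1 + x \<Longrightarrow> ((\<lambda>x. ln (1 + x)) has_real_derivative 1 / (1 + x)) (at x)"
  by (auto intro!: derivative_eq_intros simp: divide_inverse)

lemma dln2: "0 < 1 - x \<Longrightarrow> ((\<lambda>x. ln (1 - x)) has_real_derivative - 1 / (1 - x)) (at x)"
  by (auto intro!: derivative_eq_intros simp: divide_inverse)

lemma Li2_chi:
  assumes "0 < x" "x < 1"
  shows "Li2 x - Li2 (- x) + Li2 ((1 - x) / (1 + x)) - Li2 (- ((1 - x) / (1 + x)))
         = pi\<^sup>2 / 4 + ln x * (ln (1 + x) - ln (1 - x))"
proof -
  define F where "F x = Li2 x - Li2 (- x) + Li2 ((1 - x) / (1 + x)) - Li2 (- ((1 - x) / (1 + x)))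
         - ln x * (ln (1 + x) - ln (1 - x))" for x
  have d: "(F has_real_derivative 0) (at x)" if "x \<in> {0<..<1}" for x
  proof -
    define y where "y = (1 - x) / (1 + x)"
    have x: "0 < x" "x < 1" using that by auto
    have y: "0 < y" "y < 1" using x by (auto simp: y_def field_simps)
    have dy: "((\<lambda>x. (1 - x) / (1 + x)) has_real_derivative (- 2 / (1 + x)\<^sup>2)) (at x)"
      using x by (auto intro!: derivative_eq_intros simp: field_simps power2_eq_square)
    have dl: "((\<lambda>x. ln x * (ln (1 + x) - ln (1 - x))) has_real_derivative
               (1 / x * (ln (1 + x) - ln (1 - x)) + (1 / (1 + x) - - 1 / (1 - x)) * ln x)) (at x)"
      using x by (intro DERIV_mult DERIV_diff DERIV_ln_divide dln1 dln2) auto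
    have "(F has_real_derivative (G x * 1 - G (- x) * (- 1) + G y * (- 2 / (1 + x)\<^sup>2)
          - G (- y) * (- (- 2 / (1 + x)\<^sup>2))
          - (1 / x * (ln (1 + x) - ln (1 - x)) + (1 / (1 + x) - - 1 / (1 - x)) * ln x))) (at x)"
      unfolding F_def[abs_def] y_def using x y unfolding y_def
      by (intro DERIV_add DERIV_diff Li2_chain DERIV_ident DERIV_minus dy dl) auto
    moreover have "G x * 1 - G (- x) * (- 1) + G y * (- 2 / (1 + x)\<^sup>2)
          - G (- y) * (- (- 2 / (1 + x)\<^sup>2))
          - (1 / x * (ln (1 + x) - ln (1 - x)) + (1 / (1 + x) - - 1 / (1 - x)) * ln x) = 0"
    proof -
      have gx: "G x + G (- x) = (ln (1 + x) - ln (1 - x)) / x"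
        using G_eq[of x] G_eq[of "- x"] x by (simp add: field_simps)
      have l1: "ln (1 + y) = ln 2 - ln (1 + x)"
      proof -
        have "1 + y = 2 / (1 + x)" using x by (simp add: y_def field_simps)
        then show ?thesis using x by (simp add: ln_div)
      qed
      have l2: "ln (1 - y) = ln 2 + ln x - ln (1 + x)"
      proof -
        have "1 - y = 2 * x / (1 + x)" using x by (simp add: y_def field_simps)
        then show ?thesis using x by (simp add: ln_div ln_mult)
      qed
      have gy: "G y + G (- y) = - ln x / y"
        using G_eq[of y] G_eq[of "- y"] y by (simp add: field_simps l1 l2)
      have "G x * 1 - G (- x) * (- 1) + G y * (- 2 / (1 + x)\<^sup>2)
          - G (- y) * (- (- 2 / (1 + x)\<^sup>2))
          - (1 / x * (ln (1 + x) - ln (1 - x)) + (1 / (1 + x) - - 1 / (1 - x)) * ln x)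
          = (G x + G (- x)) + (- 2 / (1 + x)\<^sup>2) * (G y + G (- y))
          - (1 / x * (ln (1 + x) - ln (1 - x)) + (1 / (1 + x) - - 1 / (1 - x)) * ln x)"
        by (simp add: algebra_simps add_divide_distrib)
      also have "\<dots> = (ln (1 + x) - ln (1 - x)) / x + (- 2 / (1 + x)\<^sup>2) * (- ln x / y)
          - (1 / x * (ln (1 + x) - ln (1 - x)) + (1 / (1 + x) - - 1 / (1 - x)) * ln x)"
        unfolding gx gy ..
      also have "\<dots> = 0" unfolding y_def by (rule chi_alg[OF x])
      finally show ?thesis .
    qed
    ultimately show ?thesis by simp
  qed
  obtain c where c: "\<And>y. y \<in> {0<..<1} \<Longrightarrow> F y = c" using const_on_ivl[of 0 1 F] d by blast
  have ev: "eventually (\<lambda>y. y \<in> {0<..<1}) (at_right (0::real))"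
    by (simp add: eventually_at_right_field) (auto intro: exI[of _ 1])
  have ev2: "eventually (\<lambda>y. (1 - y) / (1 + y) \<in> {0<..<1}) (at_right (0::real))"
    by (rule eventually_mono[OF ev]) (auto simp: field_simps)
  have t1: "(F \<longlongrightarrow> Li2 0 - Li2 (- 0) + Li2 1 - Li2 (- 1) - 0) (at_right 0)"
    unfolding F_def
  proof (intro tendsto_add tendsto_diff)
    show "((\<lambda>x. Li2 x) \<longlongrightarrow> Li2 0) (at_right 0)"
      by (rule Li2_tendsto[where f="\<lambda>x. x"]) (auto intro!: eventually_mono[OF ev] tendsto_ident_at)
    show "((\<lambda>x. Li2 (- x)) \<longlongrightarrow> Li2 (- 0)) (at_right 0)"
      by (rule Li2_tendsto) (real_asymp, auto intro!: eventually_mono[OF ev])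
    show "((\<lambda>x. Li2 ((1 - x) / (1 + x))) \<longlongrightarrow> Li2 1) (at_right 0)"
      by (rule Li2_tendsto) (real_asymp, auto intro!: eventually_mono[OF ev2])
    show "((\<lambda>x. Li2 (- ((1 - x) / (1 + x)))) \<longlongrightarrow> Li2 (- 1)) (at_right 0)"
      by (rule Li2_tendsto) (real_asymp, auto intro!: eventually_mono[OF ev2])
    show "((\<lambda>x::real. ln x * (ln (1 + x) - ln (1 - x))) \<longlongrightarrow> 0) (at_right 0)" by real_asymp
  qed
  have t2: "(F \<longlongrightarrow> c) (at_right 0)"
    by (rule tendsto_eventually) (rule eventually_mono[OF ev], simp add: c)
  have "c = Li2 0 - Li2 (- 0) + Li2 1 - Li2 (- 1) - 0" by (rule tendsto_unique[OF _ t2 t1]) simp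
  then have "c = pi\<^sup>2 / 4" by (simp add: Li2_0 Li2_1 Li2_m1)
  then show ?thesis using c[of x] assms by (simp add: F_def)
qed



lemma abs_div_lt1: "0 < (b::real) \<Longrightarrow> - b < a \<Longrightarrow> a < b \<Longrightarrow> \<bar>a / b\<bar> < 1"
  by (auto simp: abs_less_iff field_simps)

lemma hill_dom:
  fixes x t :: real
  assumes "-1 < x" "x < 1" "-1 < t" "t < 1" "\<not> (x < 0 \<and> t < 0)"
  shows "0 < 1 - x * t" "\<bar>x * t\<bar> < 1" "\<bar>x * (1 - t) / (1 - x * t)\<bar> < 1" "\<bar>t * (1 - x) / (1 - x * t)\<bar> < 1"
proof -
  have xt: "(x * t \<le> x \<and> x * t \<le> t) \<or> x * t \<le> 0"
  proof (cases "0 \<le> x \<and> 0 \<le> t")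
    case True
    then have "x * t \<le> x * 1" "x * t \<le> 1 * t" using assms
      by (intro mult_left_mono mult_right_mono; simp)+
    then show ?thesis by simp
  next
    case False
    then have "x * t \<le> 0" using assms
      by (auto intro: mult_nonneg_nonpos mult_nonpos_nonneg)
    then show ?thesis by simp
  qed
  have a: "\<bar>x * t\<bar> < 1"
  proof -
    have "\<bar>x\<bar> * \<bar>t\<bar> \<le> \<bar>t\<bar>" using assms by (intro mult_left_le_one_le) auto
    then show ?thesis using assms by (simp add: abs_mult)
  qed
  then show "\<bar>x * t\<bar> < 1" .
  show p: "0 < 1 - x * t" using a by (simp add: abs_less_iff)
  show "\<bar>x * (1 - t) / (1 - x * t)\<bar> < 1"
    by (rule abs_div_lt1[OF p]) (use xt assms in \<open>auto simp: algebra_simps\<close>)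
  show "\<bar>t * (1 - x) / (1 - x * t)\<bar> < 1"
    by (rule abs_div_lt1[OF p]) (use xt assms in \<open>auto simp: algebra_simps\<close>)
qed

lemma lin_id:
  fixes A B C p q r s w :: real
  shows "- B * p + C * p - (A - C) * q - (- (B - C) * r) - (s * (B - C) + (- w + s) * (A - C))
         = (B - C) * (r - p - s) + (A - C) * (w - s - q)"
  by (simp add: algebra_simps)

lemma hill_alg:
  fixes x t A B C D :: real
  assumes "x \<noteq> 0" "t \<noteq> 0" "x \<noteq> 1" "t \<noteq> 1" "D \<noteq> 0" "D = 1 - x * t"
  shows "- B / t * 1 - (- C / (x * t)) * (x * 1) - (- (A - C) / (x * (1 - t) / D)) * (x * (x - 1) / D\<^sup>2)
     - (- (B - C) / (t * (1 - x) / D)) * ((1 - x) / D\<^sup>2)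
     - ((0 - - x / D) * (B - C) + (- 1 / (1 - t) - - x / D) * (A - C)) = 0"
proof -
  have nz: "1 - t \<noteq> 0" "1 - x \<noteq> 0" using assms by auto
  have g1: "- B / t * 1 - (- C / (x * t)) * (x * 1) = - B * (1 / t) + C * (1 / t)"
    using assms by (simp add: field_simps)
  have g3: "(- (A - C) / (x * (1 - t) / D)) * (x * (x - 1) / D\<^sup>2) = (A - C) * ((1 - x) / ((1 - t) * D))"
    using assms nz by (simp add: field_simps power2_eq_square)
  have g4: "(- (B - C) / (t * (1 - x) / D)) * ((1 - x) / D\<^sup>2) = - (B - C) * (1 / (t * D))"
    using assms nz by (simp add: field_simps power2_eq_square)
  have g5: "(0 - - x / D) = x / D" "(- 1 / (1 - t) - - x / D) = - (1 / (1 - t)) + x / D" by simp_all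
  have Q: "1 / (t * D) - 1 / t - x / D = 0"
    using assms nz by (simp add: field_simps) (simp add: distrib_left[symmetric])
  have P: "1 / (1 - t) - x / D - (1 - x) / ((1 - t) * D) = 0"
    using assms nz by (simp add: field_simps)
  show ?thesis unfolding g1 g3 g4 g5 lin_id Q P by simp
qed

lemma Li2_hill:
  assumes "-1 < x" "x < 1" "-1 < y" "y < 1" "\<not> (x < 0 \<and> y < 0)"
  shows "Li2 x + Li2 y - Li2 (x * y) = Li2 (x * (1 - y) / (1 - x * y)) + Li2 (y * (1 - x) / (1 - x * y))
         + (ln (1 - x) - ln (1 - x * y)) * (ln (1 - y) - ln (1 - x * y))"
proof (cases "x = 0")
  case True then show ?thesis by (simp add: Li2_0)
next
  case False
  define F where "F t = Li2 t - Li2 (x * t) - Li2 (x * (1 - t) / (1 - x * t)) - Li2 (t * (1 - x) / (1 - x * t))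
     - (ln (1 - x) - ln (1 - x * t)) * (ln (1 - t) - ln (1 - x * t))" for t
  define S where "S = (if 0 \<le> y then {0..<1} else {-1<..0::real})"
  have S: "-1 < t \<and> t < 1 \<and> \<not> (x < 0 \<and> t < 0)" if "t \<in> S" for t
    using assms that by (auto simp: S_def split: if_splits)
  have cS: "convex S" by (cases "0 \<le> y") (simp_all add: S_def)
  have S0: "0 \<in> S" "y \<in> S" using assms by (auto simp: S_def)
  have d: "(F has_real_derivative 0) (at t)" if "t \<in> S" for t
  proof -
    from S[OF that] have t: "-1 < t" "t < 1" "\<not> (x < 0 \<and> t < 0)" by auto
    note dom = hill_dom[OF assms(1,2) t]
    define D where "D = 1 - x * t"
    have D0: "0 < D" using dom(1) D_def by simp
    have du: "((\<lambda>t. x * (1 - t) / (1 - x * t)) has_real_derivative x * (x - 1) / D\<^sup>2) (at t)"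
      using D0 unfolding D_def by (auto intro!: derivative_eq_intros simp: field_simps power2_eq_square)
    have dv: "((\<lambda>t. t * (1 - x) / (1 - x * t)) has_real_derivative (1 - x) / D\<^sup>2) (at t)"
      using D0 unfolding D_def by (auto intro!: derivative_eq_intros simp: field_simps power2_eq_square)
    have dC: "((\<lambda>t. ln (1 - x * t)) has_real_derivative - x / D) (at t)"
      using D0 unfolding D_def by (auto intro!: derivative_eq_intros simp: field_simps)
    have dB: "((\<lambda>t. ln (1 - t)) has_real_derivative - 1 / (1 - t)) (at t)"
      by (rule dln2) (use t in auto)
    have dxt: "((\<lambda>t. x * t) has_real_derivative x * 1) (at t)"
      by (intro DERIV_cmult DERIV_ident)
    have "(F has_real_derivative (G t * 1 - G (x * t) * (x * 1) - G (x * (1 - t) / (1 - x * t)) * (x * (x - 1) / D\<^sup>2)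
          - G (t * (1 - x) / (1 - x * t)) * ((1 - x) / D\<^sup>2)
          - ((0 - - x / D) * (ln (1 - t) - ln (1 - x * t)) + (- 1 / (1 - t) - - x / D) * (ln (1 - x) - ln (1 - x * t))))) (at t)"
      unfolding F_def[abs_def] using dom t
      by (intro DERIV_diff DERIV_mult Li2_chain DERIV_ident DERIV_const dxt du dv dC dB) auto
    moreover have "G t * 1 - G (x * t) * (x * 1) - G (x * (1 - t) / (1 - x * t)) * (x * (x - 1) / D\<^sup>2)
          - G (t * (1 - x) / (1 - x * t)) * ((1 - x) / D\<^sup>2)
          - ((0 - - x / D) * (ln (1 - t) - ln (1 - x * t)) + (- 1 / (1 - t) - - x / D) * (ln (1 - x) - ln (1 - x * t))) = 0"
    proof (cases "t = 0")
      case True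
      have "\<bar>x\<bar> < 1" using assms by auto
      then show ?thesis using False by (simp add: True D_def G_0 G_eq[of x] field_simps)
    next
      case tn: False
      have ax: "\<bar>x\<bar> < 1" "\<bar>t\<bar> < 1" using assms t by auto
      have nz: "1 - t \<noteq> 0" "1 - x \<noteq> 0" "x * t \<noteq> 0" "x * (1 - t) / (1 - x * t) \<noteq> 0" "t * (1 - x) / (1 - x * t) \<noteq> 0"
        using assms t False tn D0 unfolding D_def by auto
      have l1: "ln (1 - x * (1 - t) / (1 - x * t)) = ln (1 - x) - ln (1 - x * t)"
      proof -
        have "1 - x * (1 - t) / (1 - x * t) = (1 - x) / (1 - x * t)" using D0 unfolding D_def by (simp add: field_simps)
        then show ?thesis using D0 assms unfolding D_def by (simp add: ln_div)
      qed
      have l2: "ln (1 - t * (1 - x) / (1 - x * t)) = ln (1 - t) - ln (1 - x * t)"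
      proof -
        have "1 - t * (1 - x) / (1 - x * t) = (1 - t) / (1 - x * t)" using D0 unfolding D_def by (simp add: field_simps)
        then show ?thesis using D0 t unfolding D_def by (simp add: ln_div)
      qed
      have gt: "G t = - ln (1 - t) / t" using G_eq[OF ax(2) tn] .
      have gxt: "G (x * t) = - ln (1 - x * t) / (x * t)" using G_eq[OF dom(2) nz(3)] .
      have gu: "G (x * (1 - t) / (1 - x * t)) = - (ln (1 - x) - ln (1 - x * t)) / (x * (1 - t) / D)"
        using G_eq[OF dom(3) nz(4)] unfolding l1 D_def .
      have gv: "G (t * (1 - x) / (1 - x * t)) = - (ln (1 - t) - ln (1 - x * t)) / (t * (1 - x) / D)"
        using G_eq[OF dom(4) nz(5)] unfolding l2 D_def .
      have h: "- ln (1 - t) / t * 1 - (- ln (1 - x * t) / (x * t)) * (x * 1)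
         - (- (ln (1 - x) - ln (1 - x * t)) / (x * (1 - t) / D)) * (x * (x - 1) / D\<^sup>2)
         - (- (ln (1 - t) - ln (1 - x * t)) / (t * (1 - x) / D)) * ((1 - x) / D\<^sup>2)
         - ((0 - - x / D) * (ln (1 - t) - ln (1 - x * t)) + (- 1 / (1 - t) - - x / D) * (ln (1 - x) - ln (1 - x * t))) = 0"
        by (rule hill_alg) (use False tn assms t D0 D_def in auto)
      show ?thesis unfolding gt gxt gu gv by (rule h)
    qed
    ultimately show ?thesis by simp
  qed
  obtain c where c: "\<And>t. t \<in> S \<Longrightarrow> F t = c"
  proof -
    have "\<exists>c. \<forall>t\<in>S. F t = c"
    proof (rule has_field_derivative_zero_constant[OF cS])
      fix t assume "t \<in> S"
      then show "(F has_field_derivative 0) (at t within S)"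
        by (rule has_field_derivative_at_within[OF d])
    qed
    then show ?thesis using that by blast
  qed
  have "F 0 = - Li2 x" by (simp add: F_def Li2_0)
  then have "F y = - Li2 x" using c[OF S0(1)] c[OF S0(2)] by simp
  then show ?thesis by (simp add: F_def algebra_simps)
qed



lemma s5: "sqrt 5 * sqrt 5 = (5::real)" "(sqrt 5)\<^sup>2 = (5::real)" "2 < sqrt (5::real)" "sqrt (5::real) < 3"
proof -
  show "sqrt 5 * sqrt 5 = (5::real)" by simp
  show "(sqrt 5)\<^sup>2 = (5::real)" by simp
  show "2 < sqrt (5::real)" by (rule real_less_rsqrt) simp
  show "sqrt (5::real) < 3" by (rule real_less_lsqrt) simp_all
qed

lemma s5m: "sqrt 5 * (sqrt 5 * x) = (5::real) * x" by (simp add: mult.assoc[symmetric])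

lemmas qs2 = s5(1) s5m power2_eq_square power3_eq_cube algebra_simps

lemma al: "gold_alpha = (1 + sqrt 5) / 2" by (simp add: gold_alpha_def)
lemma be: "gold_beta = (1 - sqrt 5) / 2" by (simp add: gold_beta_def)

lemma gab: "gold_alpha * gold_beta = -1" "gold_alpha + gold_beta = 1" "gold_alpha - gold_beta = sqrt 5"
  "gold_alpha\<^sup>2 = gold_alpha + 1" "gold_beta\<^sup>2 = gold_beta + 1"
  by (simp_all add: al be field_simps power2_eq_square algebra_simps)

lemma gbounds: "1 < gold_alpha" "gold_alpha < 2" "gold_beta < 0" "-1 < gold_beta" "gold_beta < -1/2"
  using s5 by (simp_all add: al be)

lemma gcubes: "gold_alpha ^ 3 = 2 + sqrt 5" "gold_beta ^ 3 = 2 - sqrt 5"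
proof -
  have "gold_alpha ^ 3 = gold_alpha * gold_alpha\<^sup>2" by (simp add: power2_eq_square power3_eq_cube)
  also have "\<dots> = 2 + sqrt 5" unfolding gab by (simp add: al field_simps power2_eq_square)
  finally show "gold_alpha ^ 3 = 2 + sqrt 5" .
  have "gold_beta ^ 3 = gold_beta * gold_beta\<^sup>2" by (simp add: power2_eq_square power3_eq_cube)
  also have "\<dots> = 2 - sqrt 5" unfolding gab by (simp add: be field_simps power2_eq_square)
  finally show "gold_beta ^ 3 = 2 - sqrt 5" .
qed

lemma e_R1: "1 - gold_alpha / 2 = gold_beta\<^sup>2 / 2"
  by (simp add: al be field_simps; simp add: qs2)

lemma e_L1: "gold_beta\<^sup>2 / 2 / (gold_beta\<^sup>2 / 2 - 1) = gold_beta ^ 3" "1 - gold_beta\<^sup>2 / 2 = gold_alpha / 2"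
proof -
  show "1 - gold_beta\<^sup>2 / 2 = gold_alpha / 2" by (simp add: al be field_simps; simp add: qs2)
  have h1: "gold_beta\<^sup>2 / 2 - 1 = - gold_alpha / 2" by (simp add: al be field_simps; simp add: qs2)
  have h2: "gold_beta\<^sup>2 / 2 = - gold_alpha / 2 * gold_beta ^ 3" by (simp add: al be field_simps; simp add: qs2)
  have "gold_beta\<^sup>2 / 2 / (gold_beta\<^sup>2 / 2 - 1) = gold_beta\<^sup>2 / 2 / (- gold_alpha / 2)" by (simp only: h1)
  also have "\<dots> = (- gold_alpha / 2 * gold_beta ^ 3) / (- gold_alpha / 2)" by (simp only: h2)
  also have "\<dots> = gold_beta ^ 3" using gbounds by simp
  finally show "gold_beta\<^sup>2 / 2 / (gold_beta\<^sup>2 / 2 - 1) = gold_beta ^ 3" .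
qed

lemma e_L2: "gold_beta / 2 / (gold_beta / 2 - 1) = - (gold_beta ^ 3)" "1 - gold_beta / 2 = gold_alpha\<^sup>2 / 2"
proof -
  show "1 - gold_beta / 2 = gold_alpha\<^sup>2 / 2" by (simp add: al be field_simps; simp add: qs2)
  have h1: "gold_beta / 2 - 1 = - (gold_alpha\<^sup>2 / 2)" by (simp add: al be field_simps; simp add: qs2)
  have h2: "gold_beta / 2 = (gold_alpha\<^sup>2 / 2) * gold_beta ^ 3" by (simp add: al be field_simps; simp add: qs2)
  have "gold_beta / 2 / (gold_beta / 2 - 1) = gold_beta / 2 / (- (gold_alpha\<^sup>2 / 2))" by (simp only: h1)
  also have "\<dots> = ((gold_alpha\<^sup>2 / 2) * gold_beta ^ 3) / (- (gold_alpha\<^sup>2 / 2))" by (simp only: h2)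
  also have "\<dots> = - (gold_beta ^ 3)" using gbounds by simp
  finally show "gold_beta / 2 / (gold_beta / 2 - 1) = - (gold_beta ^ 3)" .
qed

lemma e_C1: "(1 - - (gold_beta ^ 3)) / (1 + - (gold_beta ^ 3)) = - gold_beta" "(1 + - (gold_beta ^ 3)) / (1 - - (gold_beta ^ 3)) = gold_alpha"
proof -
  have h: "1 + - (gold_beta ^ 3) = sqrt 5 - 1" "1 - - (gold_beta ^ 3) = 3 - sqrt 5" using gcubes by simp_all
  have h2: "3 - sqrt 5 = - gold_beta * (sqrt 5 - 1)" "sqrt 5 - 1 = gold_alpha * (3 - sqrt 5)"
    by (simp add: al be field_simps; simp add: qs2)+
  have nz: "sqrt 5 - 1 \<noteq> 0" "3 - sqrt 5 \<noteq> 0" using s5 by auto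
  show "(1 - - (gold_beta ^ 3)) / (1 + - (gold_beta ^ 3)) = - gold_beta"
    unfolding h using nz by (subst h2(1)) simp
  show "(1 + - (gold_beta ^ 3)) / (1 - - (gold_beta ^ 3)) = gold_alpha"
    unfolding h using nz by (subst h2(2)) simp
qed

lemma e_R2: "1 - - gold_beta = gold_beta\<^sup>2" by (simp add: al be field_simps; simp add: qs2)

lemma e_L3: "gold_beta / (gold_beta - 1) = gold_beta\<^sup>2" "1 - gold_beta = gold_alpha"
proof -
  show "1 - gold_beta = gold_alpha" by (simp add: al be field_simps)
  have "gold_beta = gold_beta\<^sup>2 * (gold_beta - 1)" by (simp add: al be field_simps; simp add: qs2)
  moreover have "gold_beta - 1 \<noteq> 0" using gbounds by simp
  ultimately show "gold_beta / (gold_beta - 1) = gold_beta\<^sup>2" by (simp add: field_simps)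
qed

lemma e_H1: "gold_alpha / 2 * (gold_beta / 2) = - 1 / 4" "1 - gold_alpha / 2 * (gold_beta / 2) = 5 / 4"
  "gold_alpha / 2 * (1 - gold_beta / 2) / (1 - gold_alpha / 2 * (gold_beta / 2)) = gold_alpha ^ 3 / 5"
  "gold_beta / 2 * (1 - gold_alpha / 2) / (1 - gold_alpha / 2 * (gold_beta / 2)) = gold_beta ^ 3 / 5"
proof -
  show a: "gold_alpha / 2 * (gold_beta / 2) = - 1 / 4" using gab(1) by simp
  show b: "1 - gold_alpha / 2 * (gold_beta / 2) = 5 / 4" unfolding a by simp
  show "gold_alpha / 2 * (1 - gold_beta / 2) / (1 - gold_alpha / 2 * (gold_beta / 2)) = gold_alpha ^ 3 / 5"
    unfolding b by (simp add: al be field_simps; simp add: qs2)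
  show "gold_beta / 2 * (1 - gold_alpha / 2) / (1 - gold_alpha / 2 * (gold_beta / 2)) = gold_beta ^ 3 / 5"
    unfolding b by (simp add: al be field_simps; simp add: qs2)
qed

lemma e_H2: "- (gold_alpha / 2) * - (gold_beta / 2) = - 1 / 4" "1 - - (gold_alpha / 2) * - (gold_beta / 2) = 5 / 4"
  "- (gold_alpha / 2) * (1 - - (gold_beta / 2)) / (1 - - (gold_alpha / 2) * - (gold_beta / 2)) = - (1 / sqrt 5)"
  "- (gold_beta / 2) * (1 - - (gold_alpha / 2)) / (1 - - (gold_alpha / 2) * - (gold_beta / 2)) = 1 / sqrt 5"
  "1 - - (gold_alpha / 2) = sqrt 5 * gold_alpha / 2" "1 - - (gold_beta / 2) = sqrt 5 * - gold_beta / 2"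
proof -
  show a: "- (gold_alpha / 2) * - (gold_beta / 2) = - 1 / 4" using gab(1) by simp
  show b: "1 - - (gold_alpha / 2) * - (gold_beta / 2) = 5 / 4" unfolding a by simp
  show "- (gold_alpha / 2) * (1 - - (gold_beta / 2)) / (1 - - (gold_alpha / 2) * - (gold_beta / 2)) = - (1 / sqrt 5)"
    unfolding b by (simp add: al be field_simps; simp add: qs2)
  show "- (gold_beta / 2) * (1 - - (gold_alpha / 2)) / (1 - - (gold_alpha / 2) * - (gold_beta / 2)) = 1 / sqrt 5"
    unfolding b by (simp add: al be field_simps; simp add: qs2)
  show "1 - - (gold_alpha / 2) = sqrt 5 * gold_alpha / 2" by (simp add: al be field_simps; simp add: qs2)
  show "1 - - (gold_beta / 2) = sqrt 5 * - gold_beta / 2" by (simp add: al be field_simps; simp add: qs2)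
qed

lemma e_D: "(gold_alpha / 2)\<^sup>2 = gold_alpha\<^sup>2 / 4" "(gold_beta / 2)\<^sup>2 = gold_beta\<^sup>2 / 4" "(1 / sqrt 5)\<^sup>2 = 1 / 5" "(1 / 5)\<^sup>2 = (1 / 25 :: real)"
  by (simp_all add: power_divide)

lemma e_La: "- 1 / 4 / (- 1 / 4 - 1) = (1 / 5 :: real)" "1 - - 1 / 4 = (5 / 4 :: real)" by simp_all

lemma e_H3: "1 / sqrt 5 * - (1 / sqrt 5) = - (1 / 5)" "1 - 1 / sqrt 5 * - (1 / sqrt 5) = 6 / 5"
  "1 / sqrt 5 * (1 - - (1 / sqrt 5)) / (1 - 1 / sqrt 5 * - (1 / sqrt 5)) = gold_alpha / 3"
  "- (1 / sqrt 5) * (1 - 1 / sqrt 5) / (1 - 1 / sqrt 5 * - (1 / sqrt 5)) = gold_beta / 3"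
  "(1 - 1 / sqrt 5) / (6 / 5) = sqrt 5 * - gold_beta / 3"
  "(1 - - (1 / sqrt 5)) / (6 / 5) = sqrt 5 * gold_alpha / 3"
proof -
  show a: "1 / sqrt 5 * - (1 / sqrt 5) = - (1 / 5)" by simp
  show b: "1 - 1 / sqrt 5 * - (1 / sqrt 5) = 6 / 5" unfolding a by simp
  show "1 / sqrt 5 * (1 - - (1 / sqrt 5)) / (1 - 1 / sqrt 5 * - (1 / sqrt 5)) = gold_alpha / 3"
    unfolding b by (simp add: al be field_simps; simp add: qs2)
  show "- (1 / sqrt 5) * (1 - 1 / sqrt 5) / (1 - 1 / sqrt 5 * - (1 / sqrt 5)) = gold_beta / 3"
    unfolding b by (simp add: al be field_simps; simp add: qs2)
  show "(1 - 1 / sqrt 5) / (6 / 5) = sqrt 5 * - gold_beta / 3"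
    by (simp add: al be field_simps; simp add: qs2)
  show "(1 - - (1 / sqrt 5)) / (6 / 5) = sqrt 5 * gold_alpha / 3"
    by (simp add: al be field_simps; simp add: qs2)
qed



lemma ln_div_pos: "0 < (p::real) \<Longrightarrow> 0 < q \<Longrightarrow> ln p - ln q = ln (p / q)"
  by (simp add: ln_div)

lemma ln3: "0 < (a::real) \<Longrightarrow> 0 < b \<Longrightarrow> 0 < c \<Longrightarrow> ln (a * b / c) = ln a + ln b - ln c"
  by (simp add: ln_div ln_mult)

lemma gold_alpha0: "gold_alpha \<noteq> 0" "gold_beta \<noteq> 0" using gbounds by simp_all

lemma isq: "0 < 1 / sqrt 5" "1 / sqrt 5 < (1::real)" "-1 < 1 / sqrt (5::real)" "- (1 / sqrt 5) < (1::real)"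
  using s5(3) by (auto simp: field_simps)

lemma lnf: "0 < ln gold_alpha" "ln (- gold_beta) = - ln gold_alpha" "ln (gold_beta\<^sup>2) = - 2 * ln gold_alpha" "ln (gold_alpha\<^sup>2) = 2 * ln gold_alpha"
  "ln (sqrt 5) = ln 5 / 2"
proof -
  show "0 < ln gold_alpha" using gbounds by (simp add: ln_gt_zero)
  have "- gold_beta = inverse gold_alpha" using gab(1) gbounds by (simp add: field_simps)
  then show lb: "ln (- gold_beta) = - ln gold_alpha" by (simp add: ln_inverse)
  have "gold_beta\<^sup>2 = (- gold_beta)\<^sup>2" by simp
  then show "ln (gold_beta\<^sup>2) = - 2 * ln gold_alpha" using lb by (simp only: ln_realpow; simp)
  show "ln (gold_alpha\<^sup>2) = 2 * ln gold_alpha" by (simp add: ln_realpow)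
  show "ln (sqrt 5) = ln 5 / 2" by (simp add: ln_sqrt)
qed

lemma bsq: "0 < gold_beta\<^sup>2" "gold_beta\<^sup>2 < 1" "0 < gold_alpha\<^sup>2"
  using gbounds gab by auto

lemma claim1: "Li2 (gold_alpha / 2) + Li2 (gold_beta / 2) = pi\<^sup>2 / 12 + 2 * (ln gold_alpha)\<^sup>2 - (ln 2)\<^sup>2"
proof -
  note b = gbounds s5 bsq gcubes
  have lA2: "ln (gold_alpha / 2) = ln gold_alpha - ln 2" using b by (simp add: ln_div)
  have lB22: "ln (gold_beta\<^sup>2 / 2) = - 2 * ln gold_alpha - ln 2" using b lnf by (simp add: ln_div)
  have lA22: "ln (gold_alpha\<^sup>2 / 2) = 2 * ln gold_alpha - ln 2" using b lnf by (simp add: ln_div)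
  have lmB3: "ln (- (gold_beta ^ 3)) = - 3 * ln gold_alpha"
  proof -
    have "- (gold_beta ^ 3) = (- gold_beta) ^ 3" by simp
    then show ?thesis using lnf(2) by (simp only: ln_realpow; simp)
  qed
  have lC: "ln (1 + - (gold_beta ^ 3)) - ln (1 - - (gold_beta ^ 3)) = ln gold_alpha"
    using e_C1(2) b by (subst ln_div_pos) auto
  have R1: "Li2 (gold_alpha / 2) + Li2 (gold_beta\<^sup>2 / 2) = pi\<^sup>2 / 6 - (ln gold_alpha - ln 2) * (- 2 * ln gold_alpha - ln 2)"
    using Li2_refl[of "gold_alpha / 2"] b unfolding e_R1 lA2 lB22 by simp
  have L1: "Li2 (gold_beta\<^sup>2 / 2) + Li2 (gold_beta ^ 3) = - (ln gold_alpha - ln 2)\<^sup>2 / 2"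
    using Li2_landen[of "gold_beta\<^sup>2 / 2"] b unfolding e_L1 lA2 by simp
  have L2: "Li2 (gold_beta / 2) + Li2 (- (gold_beta ^ 3)) = - (2 * ln gold_alpha - ln 2)\<^sup>2 / 2"
    using Li2_landen[of "gold_beta / 2"] b unfolding e_L2 lA22 by simp
  have C1: "Li2 (- (gold_beta ^ 3)) - Li2 (gold_beta ^ 3) + Li2 (- gold_beta) - Li2 gold_beta = pi\<^sup>2 / 4 + (- 3 * ln gold_alpha) * ln gold_alpha"
    using Li2_chi[of "- (gold_beta ^ 3)"] b unfolding e_C1(1) minus_minus lmB3 lC by simp
  have R2: "Li2 (- gold_beta) + Li2 (gold_beta\<^sup>2) = pi\<^sup>2 / 6 - (- ln gold_alpha) * (- 2 * ln gold_alpha)"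
    using Li2_refl[of "- gold_beta"] b unfolding e_R2 lnf(2) lnf(3) by simp
  have L3: "Li2 gold_beta + Li2 (gold_beta\<^sup>2) = - (ln gold_alpha)\<^sup>2 / 2"
    using Li2_landen[of gold_beta] b unfolding e_L3 by simp
  show ?thesis using R1 L1 L2 C1 R2 L3 by algebra
qed

lemma l54: "ln (5 / 4 :: real) = ln 5 - 2 * ln 2"
proof -
  have "ln (5 / 4 :: real) = ln 5 - ln (2 ^ 2)" by (simp add: ln_div)
  then show ?thesis by (simp only: ln_realpow; simp)
qed

lemma claim2: "Li2 (gold_alpha ^ 3 / 5) + Li2 (gold_beta ^ 3 / 5) =
      pi\<^sup>2 / 12 + 6 * (ln gold_alpha)\<^sup>2 - 2 * (ln 2)\<^sup>2 + 2 * ln 2 * ln 5 - (ln 5)\<^sup>2 - Li2 (- 1 / 4)"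
proof -
  note b = gbounds s5 bsq gcubes
  define x where "x = gold_alpha / 2"
  define y where "y = gold_beta / 2"
  have u: "x * (1 - y) / (1 - x * y) = gold_alpha ^ 3 / 5" "y * (1 - x) / (1 - x * y) = gold_beta ^ 3 / 5"
    unfolding x_def y_def using e_H1 by simp_all
  have d1: "ln (1 - x) - ln (1 - x * y) = - 2 * ln gold_alpha + ln 2 - ln 5"
  proof -
    have "ln (1 - x) = - 2 * ln gold_alpha - ln 2" unfolding x_def e_R1 using b lnf by (simp add: ln_div)
    moreover have "ln (1 - x * y) = ln 5 - 2 * ln 2" unfolding x_def y_def e_H1 e_La(2) l54 ..
    ultimately show ?thesis by simp
  qed
  have d2: "ln (1 - y) - ln (1 - x * y) = 2 * ln gold_alpha + ln 2 - ln 5"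
  proof -
    have "ln (1 - y) = 2 * ln gold_alpha - ln 2" unfolding y_def e_L2 using b lnf by (simp add: ln_div)
    moreover have "ln (1 - x * y) = ln 5 - 2 * ln 2" unfolding x_def y_def e_H1 e_La(2) l54 ..
    ultimately show ?thesis by simp
  qed
  have xy: "x * y = - 1 / 4" unfolding x_def y_def using e_H1 by simp
  have H: "Li2 x + Li2 y - Li2 (- 1 / 4) = Li2 (gold_alpha ^ 3 / 5) + Li2 (gold_beta ^ 3 / 5)
     + (- 2 * ln gold_alpha + ln 2 - ln 5) * (2 * ln gold_alpha + ln 2 - ln 5)"
    using Li2_hill[of x y] b unfolding u d1 d2 unfolding xy by (simp add: x_def y_def)
  show ?thesis using H claim1 unfolding x_def y_def by algebra
qed

lemma claim7: "Li2 (gold_alpha\<^sup>2 / 4) + Li2 (gold_beta\<^sup>2 / 4) =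
      pi\<^sup>2 / 6 + 2 * (ln gold_alpha)\<^sup>2 - (ln 5)\<^sup>2 / 2 + 2 * ln 2 * ln 5 - 4 * (ln 2)\<^sup>2 - Li2 (1 / 5)"
proof -
  note b = gbounds s5 bsq gcubes
  have D1: "Li2 (gold_alpha / 2) + Li2 (- (gold_alpha / 2)) = Li2 (gold_alpha\<^sup>2 / 4) / 2"
    using Li2_dup_open[of "gold_alpha / 2"] b unfolding e_D by simp
  have D2: "Li2 (gold_beta / 2) + Li2 (- (gold_beta / 2)) = Li2 (gold_beta\<^sup>2 / 4) / 2"
    using Li2_dup_open[of "gold_beta / 2"] b unfolding e_D by simp
  have D3: "Li2 (1 / sqrt 5) + Li2 (- (1 / sqrt 5)) = Li2 (1 / 5) / 2"
    using Li2_dup_open[of "1 / sqrt 5"] b unfolding e_D by simp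
  have La: "Li2 (- 1 / 4) + Li2 (1 / 5) = - (ln 5 - 2 * ln 2)\<^sup>2 / 2"
    using Li2_landen[of "- 1 / 4"] unfolding e_La l54 by simp
  define x where "x = - (gold_alpha / 2)"
  define y where "y = - (gold_beta / 2)"
  have u: "x * (1 - y) / (1 - x * y) = - (1 / sqrt 5)" "y * (1 - x) / (1 - x * y) = 1 / sqrt 5"
    unfolding x_def y_def using e_H2 by simp_all
  have d1: "ln (1 - x) - ln (1 - x * y) = ln gold_alpha + ln 2 - ln 5 / 2"
  proof -
    have "ln (1 - x) = ln 5 / 2 + ln gold_alpha - ln 2" unfolding x_def e_H2
      using ln3[of "sqrt 5" gold_alpha 2] b lnf by simp
    moreover have "ln (1 - x * y) = ln 5 - 2 * ln 2" unfolding x_def y_def e_H2 e_La(2) l54 ..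
    ultimately show ?thesis by simp
  qed
  have d2: "ln (1 - y) - ln (1 - x * y) = - ln gold_alpha + ln 2 - ln 5 / 2"
  proof -
    have "ln (1 - y) = ln 5 / 2 - ln gold_alpha - ln 2" unfolding y_def e_H2
      using ln3[of "sqrt 5" "- gold_beta" 2] b lnf by simp
    moreover have "ln (1 - x * y) = ln 5 - 2 * ln 2" unfolding x_def y_def e_H2 e_La(2) l54 ..
    ultimately show ?thesis by simp
  qed
  have xy: "x * y = - 1 / 4" unfolding x_def y_def using e_H2 by simp
  have H: "Li2 x + Li2 y - Li2 (- 1 / 4) = Li2 (- (1 / sqrt 5)) + Li2 (1 / sqrt 5)
     + (ln gold_alpha + ln 2 - ln 5 / 2) * (- ln gold_alpha + ln 2 - ln 5 / 2)"
    using Li2_hill[of x y] b unfolding u d1 d2 unfolding xy by (simp add: x_def y_def)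
  show ?thesis using H claim1 D1 D2 D3 La unfolding x_def y_def by algebra
qed

lemma claim8: "Li2 (gold_alpha / 3) + Li2 (gold_beta / 3) =
      (ln gold_alpha)\<^sup>2 - (ln 5)\<^sup>2 / 4 + ln 3 * ln 5 - (ln 3)\<^sup>2 + 3 / 2 * Li2 (1 / 5) - Li2 (1 / 25) / 2"
proof -
  note b = gbounds s5 bsq gcubes isq
  have D3: "Li2 (1 / sqrt 5) + Li2 (- (1 / sqrt 5)) = Li2 (1 / 5) / 2"
    using Li2_dup_open[of "1 / sqrt 5"] b unfolding e_D by simp
  have D4: "Li2 (1 / 5) + Li2 (- (1 / 5)) = Li2 (1 / 25) / 2"
    using Li2_dup_open[of "1 / 5"] unfolding e_D by simp
  define x where "x = 1 / sqrt 5"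
  define y where "y = - (1 / sqrt 5)"
  have u: "x * (1 - y) / (1 - x * y) = gold_alpha / 3" "y * (1 - x) / (1 - x * y) = gold_beta / 3"
    unfolding x_def y_def using e_H3 by simp_all
  have d1: "ln (1 - x) - ln (1 - x * y) = ln 5 / 2 - ln gold_alpha - ln 3"
  proof -
    have "ln (1 - x) - ln (1 - x * y) = ln ((1 - 1 / sqrt 5) / (6 / 5))"
      unfolding x_def y_def e_H3(2) using b by (intro ln_div_pos) (auto simp: field_simps)
    also have "\<dots> = ln 5 / 2 - ln gold_alpha - ln 3" unfolding e_H3
      using ln3[of "sqrt 5" "- gold_beta" 3] b lnf by simp
    finally show ?thesis .
  qed
  have d2: "ln (1 - y) - ln (1 - x * y) = ln 5 / 2 + ln gold_alpha - ln 3"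
  proof -
    have "ln (1 - y) - ln (1 - x * y) = ln ((1 - - (1 / sqrt 5)) / (6 / 5))"
      unfolding x_def y_def e_H3(2) using b by (intro ln_div_pos) (auto simp: field_simps)
    also have "\<dots> = ln 5 / 2 + ln gold_alpha - ln 3" unfolding e_H3
      using ln3[of "sqrt 5" gold_alpha 3] b lnf by simp
    finally show ?thesis .
  qed
  have xy: "x * y = - (1 / 5)" unfolding x_def y_def using e_H3 by simp
  have H: "Li2 x + Li2 y - Li2 (- (1 / 5)) = Li2 (gold_alpha / 3) + Li2 (gold_beta / 3)
     + (ln 5 / 2 - ln gold_alpha - ln 3) * (ln 5 / 2 + ln gold_alpha - ln 3)"
    using Li2_hill[of x y] b unfolding u d1 d2 unfolding xy by (simp add: x_def y_def)
  have e: "(ln 5 / 2 - ln gold_alpha - ln 3) * (ln 5 / 2 + ln gold_alpha - ln 3) = (ln 5)\<^sup>2 / 4 - ln 3 * ln 5 + (ln 3)\<^sup>2 - (ln gold_alpha)\<^sup>2"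
    by (simp add: algebra_simps power2_eq_square)
  show ?thesis using H D3 D4 unfolding x_def y_def e by linarith
qed

lemma claim_even:
  assumes "even r"
  shows "Li2 (gold_alpha ^ r / lucasR r) + Li2 (gold_beta ^ r / lucasR r) =
        pi\<^sup>2 / 6 + (real r)\<^sup>2 * (ln gold_alpha)\<^sup>2 - (ln (lucasR r))\<^sup>2"
proof -
  obtain k where k: "r = 2 * k" using assms by blast
  have bp: "gold_beta ^ r = (gold_beta\<^sup>2) ^ k" unfolding k by (simp add: power_mult)
  have b0: "0 < gold_beta ^ r" unfolding bp using bsq by simp
  have a0: "0 < gold_alpha ^ r" using gbounds by simp
  define L where "L = lucasR r"
  have L: "L = gold_alpha ^ r + gold_beta ^ r" by (simp add: L_def lucasR_def)
  have L0: "0 < L" using a0 b0 L by simp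
  have e: "1 - gold_alpha ^ r / L = gold_beta ^ r / L" using L0 L by (simp add: field_simps)
  have la: "ln (gold_alpha ^ r / L) = real r * ln gold_alpha - ln L" using a0 L0 gold_alpha0 by (simp add: ln_div ln_realpow)
  have lb: "ln (gold_beta ^ r / L) = - (real r * ln gold_alpha) - ln L"
  proof -
    have "ln (gold_beta ^ r) = real k * ln (gold_beta\<^sup>2)" unfolding bp by (simp only: ln_realpow)
    also have "\<dots> = - (real r * ln gold_alpha)" unfolding lnf k by simp
    finally show ?thesis using b0 L0 gold_alpha0 by (simp add: ln_div)
  qed
  have x: "0 < gold_alpha ^ r / L" "gold_alpha ^ r / L < 1" using a0 b0 L0 L by (auto simp: field_simps)
  have "Li2 (gold_alpha ^ r / L) + Li2 (gold_beta ^ r / L) = pi\<^sup>2 / 6 - (real r * ln gold_alpha - ln L) * (- (real r * ln gold_alpha) - ln L)"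
    using Li2_refl[OF x] unfolding e la lb .
  then show ?thesis unfolding L_def by (simp add: algebra_simps power2_eq_square)
qed

lemma claim_odd:
  assumes "odd r"
  shows "Li2 (gold_alpha ^ r / (sqrt 5 * fibR r)) + Li2 (- (gold_beta ^ r) / (sqrt 5 * fibR r)) =
        pi\<^sup>2 / 6 + (real r)\<^sup>2 * (ln gold_alpha)\<^sup>2 - (ln 5)\<^sup>2 / 4 - ln 5 * ln (fibR r) - (ln (fibR r))\<^sup>2"
proof -
  have mb: "- (gold_beta ^ r) = (- gold_beta) ^ r" using assms by simp
  have b0: "0 < - (gold_beta ^ r)" unfolding mb using gbounds by simp
  have a0: "0 < gold_alpha ^ r" using gbounds by simp
  have M: "sqrt 5 * fibR r = gold_alpha ^ r - gold_beta ^ r" unfolding fibR_def gab(3) by simp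
  have "0 < sqrt 5 * fibR r" unfolding M using a0 b0 by linarith
  then have F0: "0 < fibR r" by (rule zero_less_mult_pos) (use s5 in auto)
  define M' where "M' = sqrt 5 * fibR r"
  have M0: "0 < M'" using F0 by (simp add: M'_def)
  have e: "1 - gold_alpha ^ r / M' = - (gold_beta ^ r) / M'"
  proof -
    have "1 - gold_alpha ^ r / M' = (M' - gold_alpha ^ r) / M'" using M0 by (simp add: field_simps)
    also have "\<dots> = - (gold_beta ^ r) / M'" using M by (simp add: M'_def)
    finally show ?thesis .
  qed
  have lM: "ln M' = ln 5 / 2 + ln (fibR r)" unfolding M'_def using F0 lnf(5) by (simp add: ln_mult)
  have la: "ln (gold_alpha ^ r / M') = real r * ln gold_alpha - ln M'" using a0 M0 gold_alpha0 by (simp add: ln_div ln_realpow)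
  have lb: "ln (- (gold_beta ^ r) / M') = - (real r * ln gold_alpha) - ln M'"
  proof -
    have "ln (- (gold_beta ^ r)) = real r * ln (- gold_beta)" unfolding mb by (simp only: ln_realpow)
    also have "\<dots> = - (real r * ln gold_alpha)" unfolding lnf by simp
    finally have l1: "ln (- (gold_beta ^ r)) = - (real r * ln gold_alpha)" .
    have "ln (- (gold_beta ^ r) / M') = ln (- (gold_beta ^ r)) - ln M'" by (rule ln_div_pos[OF b0 M0, symmetric])
    then show ?thesis unfolding l1 .
  qed
  have bn: "gold_beta ^ r < 0" using b0 by linarith
  have "gold_alpha ^ r < M'" using M bn unfolding M'_def by linarith
  then have x: "0 < gold_alpha ^ r / M'" "gold_alpha ^ r / M' < 1" using a0 M0 by simp_all
  have "Li2 (gold_alpha ^ r / M') + Li2 (- (gold_beta ^ r) / M') = pi\<^sup>2 / 6 - (real r * ln gold_alpha - ln M') * (- (real r * ln gold_alpha) - ln M')"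
    using Li2_refl[OF x] unfolding e la lb .
  then show ?thesis unfolding lM unfolding M'_def by (simp add: algebra_simps power2_eq_square)
qed


lemma lucas2: "lucasR 2 = 3"
  using gab by (simp add: lucasR_def)

lemma fib1: "fibR 1 = 1" "fibR (Suc 0) = 1"
  using gab s5 by (simp_all add: fibR_def)

lemma claim4: "Li2 (gold_alpha ^ 2 / 3) + Li2 (gold_beta ^ 2 / 3) = pi\<^sup>2 / 6 + 4 * (ln gold_alpha)\<^sup>2 - (ln 3)\<^sup>2"
  using claim_even[of 2] by (simp add: lucas2)

lemma claim6: "Li2 (gold_alpha / sqrt 5) + Li2 (- gold_beta / sqrt 5) = pi\<^sup>2 / 6 + (ln gold_alpha)\<^sup>2 - (ln 5)\<^sup>2 / 4"
  using claim_odd[of 1] by (simp add: fib1)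

theorem theorem14:
  defines "\<alpha> \<equiv> gold_alpha" and "\<beta> \<equiv> gold_beta"
  shows
   "(Li2 (\<alpha> / 2) + Li2 (\<beta> / 2) = pi\<^sup>2 / 12 + 2 * (ln \<alpha>)\<^sup>2 - (ln 2)\<^sup>2) \<and>
   (Li2 (\<alpha> ^ 3 / 5) + Li2 (\<beta> ^ 3 / 5) =
      pi\<^sup>2 / 12 + 6 * (ln \<alpha>)\<^sup>2 - 2 * (ln 2)\<^sup>2 + 2 * ln 2 * ln 5 - (ln 5)\<^sup>2 - Li2 (- 1 / 4)) \<and>
   (\<forall>r::nat. even r \<longrightarrow>
      Li2 (\<alpha> ^ r / lucasR r) + Li2 (\<beta> ^ r / lucasR r) =
        pi\<^sup>2 / 6 + (real r)\<^sup>2 * (ln \<alpha>)\<^sup>2 - (ln (lucasR r))\<^sup>2) \<and>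
   (Li2 (\<alpha> ^ 2 / 3) + Li2 (\<beta> ^ 2 / 3) = pi\<^sup>2 / 6 + 4 * (ln \<alpha>)\<^sup>2 - (ln 3)\<^sup>2) \<and>
   (\<forall>r::nat. odd r \<longrightarrow>
      Li2 (\<alpha> ^ r / (sqrt 5 * fibR r)) + Li2 (- (\<beta> ^ r) / (sqrt 5 * fibR r)) =
        pi\<^sup>2 / 6 + (real r)\<^sup>2 * (ln \<alpha>)\<^sup>2 - (ln 5)\<^sup>2 / 4 - ln 5 * ln (fibR r) - (ln (fibR r))\<^sup>2) \<and>
   (Li2 (\<alpha> / sqrt 5) + Li2 (- \<beta> / sqrt 5) = pi\<^sup>2 / 6 + (ln \<alpha>)\<^sup>2 - (ln 5)\<^sup>2 / 4) \<and>
   (Li2 (\<alpha>\<^sup>2 / 4) + Li2 (\<beta>\<^sup>2 / 4) =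
      pi\<^sup>2 / 6 + 2 * (ln \<alpha>)\<^sup>2 - (ln 5)\<^sup>2 / 2 + 2 * ln 2 * ln 5 - 4 * (ln 2)\<^sup>2 - Li2 (1 / 5)) \<and>
   (Li2 (\<alpha> / 3) + Li2 (\<beta> / 3) =
      (ln \<alpha>)\<^sup>2 - (ln 5)\<^sup>2 / 4 + ln 3 * ln 5 - (ln 3)\<^sup>2 + 3 / 2 * Li2 (1 / 5) - Li2 (1 / 25) / 2)"
proof -
  show ?thesis unfolding assms
    using claim1 claim2 claim_even claim4 claim_odd claim6 claim7 claim8 by blast
qed

end
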